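(* Let $\alpha_1,\dots,\alpha_k$ be nonnegative reals with $\sum_{i=1}^k\alpha_i=1$ and let $\frac13\le\theta\le1$. For $I\subset\{1,\dots,k\}$ write $\alpha_I=\sum_{i\in I}\alpha_i$. Consider the statements: ($I$) $\alpha_i\ge1-\theta$ for some $i$; ($I_2^{\mathrm{maj}}$) $\alpha_{\{i,j\}}\ge1-\theta$ for some $1\le i<j\le k$; ($I_2$) $\alpha_{\{i,j\}}\ge\frac32(1-\theta)$ for some $1\le i<j\le k$; ($II^{\mathrm{maj}}$) there is a partition $\{1,\dots,k\}=I\uplus J\uplus J'$ with $2\theta-1\le\alpha_I\le4\theta-2$ and $|\alpha_J-\alpha_{J'}|\le2\theta-1$; ($II^{\mathrm{min}}$) there is a partition $\{1,\dots,k\}=J\uplus J'$ with $|\alpha_J-\alpha_{J'}|\le2\theta-1$. Then: (i) if $\theta=5/8$, at least one of ($I$), ($II^{\mathrm{maj}}$) holds; (ii) if $\theta\ge3/5$, at least one of ($I$), ($I_2$), ($II^{\mathrm{min}}$) holds; (iii) if $\theta=7/12$, at least one of ($I$), ($I_2^{\mathrm{maj}}$), ($II^{\mathrm{maj}}$) holds; (iv) if $k=5$ and $\theta=11/20$, at least one of ($I_2^{\mathrm{maj}}$), ($II^{\mathrm{maj}}$) holds; (v) if $k\in\{3,4\}$ and $\theta\ge1/2$, then ($I_2^{\mathrm{maj}}$) holds; (vi) if $k=3$ and $\theta\ge5/9$, or $k=2$ and $\theta\ge1/3$, then ($I_2$) holds. *)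

theory Defs
  imports Complex_Main
begin

definition condI :: "nat \<Rightarrow> (nat \<Rightarrow> real) \<Rightarrow> real \<Rightarrow> bool" where
  "condI k \<alpha> \<theta> \<longleftrightarrow> (\<exists>i\<in>{1..k}. \<alpha> i \<ge> 1 - \<theta>)"

definition condI2maj :: "nat \<Rightarrow> (nat \<Rightarrow> real) \<Rightarrow> real \<Rightarrow> bool" where
  "condI2maj k \<alpha> \<theta> \<longleftrightarrow>
     (\<exists>i j. 1 \<le> i \<and> i < j \<and> j \<le> k \<and> sum \<alpha> {i, j} \<ge> 1 - \<theta>)"

definition condI2 :: "nat \<Rightarrow> (nat \<Rightarrow> real) \<Rightarrow> real \<Rightarrow> bool" where
  "condI2 k \<alpha> \<theta> \<longleftrightarrow>
     (\<exists>i j. 1 \<le> i \<and> i < j \<and> j \<le> k \<and> sum \<alpha> {i, j} \<ge> 3/2 * (1 - \<theta>))"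

definition condIImaj :: "nat \<Rightarrow> (nat \<Rightarrow> real) \<Rightarrow> real \<Rightarrow> bool" where
  "condIImaj k \<alpha> \<theta> \<longleftrightarrow>
     (\<exists>I J J'. I \<union> J \<union> J' = {1..k} \<and> I \<inter> J = {} \<and> I \<inter> J' = {} \<and> J \<inter> J' = {} \<and>
        2*\<theta> - 1 \<le> sum \<alpha> I \<and> sum \<alpha> I \<le> 4*\<theta> - 2 \<and>
        \<bar>sum \<alpha> J - sum \<alpha> J'\<bar> \<le> 2*\<theta> - 1)"

definition condIImin :: "nat \<Rightarrow> (nat \<Rightarrow> real) \<Rightarrow> real \<Rightarrow> bool" where
  "condIImin k \<alpha> \<theta> \<longleftrightarrow>
     (\<exists>J J'. J \<union> J' = {1..k} \<and> J \<inter> J' = {} \<and>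
        \<bar>sum \<alpha> J - sum \<alpha> J'\<bar> \<le> 2*\<theta> - 1)"

end

theory Submission
  imports Defs
begin

lemma card4_cases:
  assumes "card (L::'a set) = 4"
  shows "\<exists>a b c d. L = {a,b,c,d} \<and> a \<noteq> b \<and> a \<noteq> c \<and> a \<noteq> d \<and> b \<noteq> c \<and> b \<noteq> d \<and> c \<noteq> d"
proof -
  from assms have "card L = Suc 3" by simp
  then obtain a B where "L = insert a B" "a \<notin> B" "card B = 3"
    unfolding card_Suc_eq by blast
  moreover from \<open>card B = 3\<close> obtain b c d where "B = {b,c,d}" "b \<noteq> c" "c \<noteq> d" "b \<noteq> d"
    by (auto simp: card_3_iff)
  ultimately have "L = {a,b,c,d}" "a \<noteq> b" "a \<noteq> c" "a \<noteq> d" "b \<noteq> c" "b \<noteq> d" "c \<noteq> d"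
    by auto
  then show ?thesis by blast
qed

lemma core_split:
  fixes \<alpha> :: "'a \<Rightarrow> real"
  assumes "finite F" "\<forall>i\<in>F. 0 \<le> \<alpha> i \<and> \<alpha> i \<le> m"
  shows "\<exists>A B. A \<union> B = F \<and> A \<inter> B = {} \<and> \<bar>D + sum \<alpha> A - sum \<alpha> B\<bar> \<le> max m (\<bar>D\<bar> - sum \<alpha> F)"
  using assms
proof (induction F arbitrary: D rule: finite_induct)
  case empty
  have "\<bar>D + sum \<alpha> {} - sum \<alpha> {}\<bar> \<le> max m (\<bar>D\<bar> - sum \<alpha> {})" by simp
  then show ?case by blast
next
  case (insert x F)
  have pF: "\<forall>i\<in>F. 0 \<le> \<alpha> i \<and> \<alpha> i \<le> m" using insert.prems by simp
  have sF: "sum \<alpha> F \<ge> 0" using pF by (auto intro: sum_nonneg)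
  have ax: "0 \<le> \<alpha> x" "\<alpha> x \<le> m" using insert.prems by auto
  have sI: "sum \<alpha> (insert x F) = \<alpha> x + sum \<alpha> F" using insert.hyps by simp
  show ?case
  proof (cases "D \<ge> 0")
    case True
    obtain A B where AB: "A \<union> B = F" "A \<inter> B = {}"
      "\<bar>(D - \<alpha> x) + sum \<alpha> A - sum \<alpha> B\<bar> \<le> max m (\<bar>D - \<alpha> x\<bar> - sum \<alpha> F)"
      using insert.IH[OF pF, of "D - \<alpha> x"] by blast
    have xB: "x \<notin> B" "x \<notin> A" using AB insert.hyps by auto
    have fB: "finite B" using AB insert.hyps by auto
    have se: "sum \<alpha> (insert x B) = \<alpha> x + sum \<alpha> B" using xB fB by simp
    have mx: "max m (\<bar>D - \<alpha> x\<bar> - sum \<alpha> F) \<le> max m (\<bar>D\<bar> - sum \<alpha> (insert x F))"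
    proof (cases "\<alpha> x \<le> D")
      case c: True
      have "\<bar>D - \<alpha> x\<bar> - sum \<alpha> F = \<bar>D\<bar> - sum \<alpha> (insert x F)"
        using c True sI by (simp add: abs_of_nonneg)
      then show ?thesis by simp
    next
      case c: False
      have "\<bar>D - \<alpha> x\<bar> = \<alpha> x - D" using c by (simp add: abs_of_neg)
      then have "\<bar>D - \<alpha> x\<bar> - sum \<alpha> F \<le> m" using True ax sF by linarith
      then show ?thesis by (simp add: le_max_iff_disj)
    qed
    have "D + sum \<alpha> A - sum \<alpha> (insert x B) = (D - \<alpha> x) + sum \<alpha> A - sum \<alpha> B" using se by simp
    then have "\<bar>D + sum \<alpha> A - sum \<alpha> (insert x B)\<bar> \<le> max m (\<bar>D\<bar> - sum \<alpha> (insert x F))"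
      using AB(3) mx by simp
    moreover have "A \<union> insert x B = insert x F" using AB by auto
    moreover have "A \<inter> insert x B = {}" using AB xB by auto
    ultimately show ?thesis by blast
  next
    case False
    obtain A B where AB: "A \<union> B = F" "A \<inter> B = {}"
      "\<bar>(D + \<alpha> x) + sum \<alpha> A - sum \<alpha> B\<bar> \<le> max m (\<bar>D + \<alpha> x\<bar> - sum \<alpha> F)"
      using insert.IH[OF pF, of "D + \<alpha> x"] by blast
    have xB: "x \<notin> B" "x \<notin> A" using AB insert.hyps by auto
    have fA: "finite A" using AB insert.hyps by auto
    have se: "sum \<alpha> (insert x A) = \<alpha> x + sum \<alpha> A" using xB fA by simp
    have mx: "max m (\<bar>D + \<alpha> x\<bar> - sum \<alpha> F) \<le> max m (\<bar>D\<bar> - sum \<alpha> (insert x F))"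
    proof (cases "D + \<alpha> x \<le> 0")
      case c: True
      have "\<bar>D + \<alpha> x\<bar> - sum \<alpha> F = \<bar>D\<bar> - sum \<alpha> (insert x F)"
        using c False sI by (simp add: abs_of_nonpos)
      then show ?thesis by simp
    next
      case c: False
      have "\<bar>D + \<alpha> x\<bar> = D + \<alpha> x" using c by (simp add: abs_of_pos)
      then have "\<bar>D + \<alpha> x\<bar> - sum \<alpha> F \<le> m" using False ax sF by linarith
      then show ?thesis by (simp add: le_max_iff_disj)
    qed
    have "D + sum \<alpha> (insert x A) - sum \<alpha> B = (D + \<alpha> x) + sum \<alpha> A - sum \<alpha> B" using se by simp
    then have "\<bar>D + sum \<alpha> (insert x A) - sum \<alpha> B\<bar> \<le> max m (\<bar>D\<bar> - sum \<alpha> (insert x F))"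
      using AB(3) mx by simp
    moreover have "insert x A \<union> B = insert x F" using AB by auto
    moreover have "insert x A \<inter> B = {}" using AB xB by auto
    ultimately show ?thesis by blast
  qed
qed

lemma subset_sum:
  fixes \<alpha> :: "'a \<Rightarrow> real"
  assumes "finite F" "\<forall>i\<in>F. 0 \<le> \<alpha> i \<and> \<alpha> i \<le> m" "0 \<le> t" "t \<le> sum \<alpha> F" "0 \<le> m"
  shows "\<exists>I\<subseteq>F. t \<le> sum \<alpha> I \<and> sum \<alpha> I \<le> t + m"
  using assms
proof (induction F rule: finite_induct)
  case empty
  then show ?case by auto
next
  case (insert x F)
  show ?case
  proof (cases "t \<le> sum \<alpha> F")
    case True
    then show ?thesis using insert by auto
  next
    case False
    then show ?thesis using insert by (intro exI[of _ "insert x F"]) auto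
  qed
qed

lemma split_ext:
  fixes \<alpha> :: "'a \<Rightarrow> real"
  assumes fin: "finite S" and nn: "\<forall>i\<in>S. 0 \<le> \<alpha> i" and LS: "Lg \<subseteq> S"
    and sm: "\<forall>i\<in>S-Lg. \<alpha> i \<le> m" and PQ: "P \<union> Q = Lg" "P \<inter> Q = {}"
    and bd: "\<bar>sum \<alpha> P - sum \<alpha> Q\<bar> \<le> m + (sum \<alpha> S - sum \<alpha> Lg)"
  shows "\<exists>J J'. J \<union> J' = S \<and> J \<inter> J' = {} \<and> \<bar>sum \<alpha> J - sum \<alpha> J'\<bar> \<le> m"
proof -
  have fF: "finite (S - Lg)" using fin by auto
  obtain A B where AB: "A \<union> B = S - Lg" "A \<inter> B = {}"
    "\<bar>(sum \<alpha> P - sum \<alpha> Q) + sum \<alpha> A - sum \<alpha> B\<bar> \<le> max m (\<bar>sum \<alpha> P - sum \<alpha> Q\<bar> - sum \<alpha> (S - Lg))"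
    using core_split[OF fF, of \<alpha> m "sum \<alpha> P - sum \<alpha> Q"] nn sm by blast
  have sd: "sum \<alpha> (S - Lg) = sum \<alpha> S - sum \<alpha> Lg" using sum_diff[OF fin LS] .
  have fins: "finite P" "finite Q" "finite A" "finite B" using fin LS PQ AB
    by (auto intro: finite_subset)
  have "sum \<alpha> (P \<union> A) = sum \<alpha> P + sum \<alpha> A"
    using fins AB PQ by (intro sum.union_disjoint) auto
  moreover have "sum \<alpha> (Q \<union> B) = sum \<alpha> Q + sum \<alpha> B"
    using fins AB PQ by (intro sum.union_disjoint) auto
  moreover have "max m (\<bar>sum \<alpha> P - sum \<alpha> Q\<bar> - sum \<alpha> (S - Lg)) \<le> m"
    using bd sd by auto
  ultimately have "\<bar>sum \<alpha> (P \<union> A) - sum \<alpha> (Q \<union> B)\<bar> \<le> m" using AB(3) by auto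
  moreover have "(P \<union> A) \<union> (Q \<union> B) = S" using AB PQ LS by auto
  moreover have "(P \<union> A) \<inter> (Q \<union> B) = {}" using AB PQ by auto
  ultimately show ?thesis by blast
qed

lemma card_bound:
  fixes \<alpha> :: "'a \<Rightarrow> real"
  assumes "finite L" "\<forall>i\<in>L. \<alpha> i > \<delta>" "L \<noteq> {}"
  shows "real (card L) * \<delta> < sum \<alpha> L"
proof -
  have "sum (\<lambda>_. \<delta>) L < sum \<alpha> L" using assms by (intro sum_strict_mono) auto
  then show ?thesis by simp
qed

lemma lg_cases:
  assumes "finite Lg" "card Lg \<le> 4"
    "Lg = {} \<Longrightarrow> R {} {}"
    "\<And>a. Lg = {a} \<Longrightarrow> R {a} {}"
    "\<And>a b. Lg = {a,b} \<Longrightarrow> a \<noteq> b \<Longrightarrow> R {a} {b}"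
    "\<And>a b d. Lg = {a,b,d} \<Longrightarrow> a \<noteq> b \<Longrightarrow> a \<noteq> d \<Longrightarrow> b \<noteq> d \<Longrightarrow> R {a,b} {d}"
    "\<And>a b d e. Lg = {a,b,d,e} \<Longrightarrow> a \<noteq> b \<Longrightarrow> a \<noteq> d \<Longrightarrow> a \<noteq> e \<Longrightarrow> b \<noteq> d
       \<Longrightarrow> b \<noteq> e \<Longrightarrow> d \<noteq> e \<Longrightarrow> R {a,b} {d,e}"
  shows "\<exists>P Q. P \<union> Q = Lg \<and> P \<inter> Q = {} \<and> R P Q"
proof -
  have "card Lg = 0 \<or> card Lg = 1 \<or> card Lg = 2 \<or> card Lg = 3 \<or> card Lg = 4" using assms(2) by linarith
  then show ?thesis
  proof (elim disjE)
    assume "card Lg = 0" then have "Lg = {}" using assms(1) by simp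
    then have "R {} {}" "{} \<union> {} = Lg" "{} \<inter> {} = {}" using assms(3) by auto
    then show ?thesis by blast
  next
    assume "card Lg = 1" then obtain a where "Lg = {a}" using card_1_singletonE by metis
    then have "R {a} {}" "{a} \<union> {} = Lg" "{a} \<inter> {} = {}" using assms(4)[of a] by auto
    then show ?thesis by blast
  next
    assume "card Lg = 2" then obtain a b where "Lg = {a,b}" "a \<noteq> b" by (auto simp: card_2_iff)
    then have "R {a} {b}" "{a} \<union> {b} = Lg" "{a} \<inter> {b} = {}" using assms(5)[of a b] by auto
    then show ?thesis by blast
  next
    assume "card Lg = 3" then obtain a b d where "Lg = {a,b,d}" "a \<noteq> b" "b \<noteq> d" "a \<noteq> d"
      by (auto simp: card_3_iff)
    then have "R {a,b} {d}" "{a,b} \<union> {d} = Lg" "{a,b} \<inter> {d} = {}" using assms(6)[of a b d] by auto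
    then show ?thesis by blast
  next
    assume "card Lg = 4" then obtain a b d e where "Lg = {a,b,d,e}" "a \<noteq> b" "a \<noteq> d" "a \<noteq> e"
      "b \<noteq> d" "b \<noteq> e" "d \<noteq> e"
      using card4_cases by blast
    then have "R {a,b} {d,e}" "{a,b} \<union> {d,e} = Lg" "{a,b} \<inter> {d,e} = {}" using assms(7)[of a b d e] by auto
    then show ?thesis by blast
  qed
qed

lemma part_ii:
  fixes \<alpha> :: "nat \<Rightarrow> real"
  assumes fin: "finite S" and nn: "\<forall>i\<in>S. 0 \<le> \<alpha> i" and s1: "sum \<alpha> S = 1"
    and c: "0 \<le> c" "c \<le> 2/5"
    and single: "\<forall>i\<in>S. \<alpha> i < c"
    and pair: "\<forall>i\<in>S. \<forall>j\<in>S. i \<noteq> j \<longrightarrow> \<alpha> i + \<alpha> j < 3/2*c"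
  shows "\<exists>J J'. J \<union> J' = S \<and> J \<inter> J' = {} \<and> \<bar>sum \<alpha> J - sum \<alpha> J'\<bar> \<le> 1 - 2*c"
proof -
  define Lg where "Lg = {i\<in>S. \<alpha> i > 1 - 2*c}"
  have LS: "Lg \<subseteq> S" and fL: "finite Lg" using fin by (auto simp: Lg_def)
  have sm: "\<forall>i\<in>S-Lg. \<alpha> i \<le> 1-2*c" by (auto simp: Lg_def)
  have T0: "sum \<alpha> Lg \<le> 1" using sum_mono2[OF fin LS, of \<alpha>] nn s1 by auto
  have card: "card Lg \<le> 4"
  proof (rule ccontr)
    assume "\<not> ?thesis" then have c5: "real (card Lg) \<ge> 5" by simp
    then have "Lg \<noteq> {}" by auto
    then have "real (card Lg) * (1 - 2*c) < sum \<alpha> Lg" using card_bound[OF fL] by (auto simp: Lg_def)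
    moreover have "5 * (1 - 2*c) \<le> real (card Lg) * (1 - 2*c)" using c5 c by (intro mult_right_mono) auto
    moreover have "1 \<le> 5 * (1 - 2*c)" using c by simp
    ultimately show False using T0 by linarith
  qed
  have mem: "\<And>a. a \<in> Lg \<Longrightarrow> a \<in> S \<and> \<alpha> a > 1 - 2*c" by (auto simp: Lg_def)
  have pr: "\<And>a b. a \<in> Lg \<Longrightarrow> b \<in> Lg \<Longrightarrow> a \<noteq> b \<Longrightarrow> \<alpha> a + \<alpha> b < 3/2*c" using pair mem by blast
  have sg: "\<And>a. a \<in> Lg \<Longrightarrow> \<alpha> a < c" using single mem by blast
  have "\<exists>P Q. P \<union> Q = Lg \<and> P \<inter> Q = {} \<and> \<bar>sum \<alpha> P - sum \<alpha> Q\<bar> \<le> (1-2*c) + (sum \<alpha> S - sum \<alpha> Lg)"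
  proof (rule lg_cases[OF fL card])
    assume "Lg = {}" then show "\<bar>sum \<alpha> {} - sum \<alpha> {}\<bar> \<le> (1-2*c) + (sum \<alpha> S - sum \<alpha> Lg)" using s1 c by simp
  next
    fix a assume L: "Lg = {a}"
    then have "a \<in> Lg" by auto
    have e: "sum \<alpha> Lg = \<alpha> a" using L by simp
    show "\<bar>sum \<alpha> {a} - sum \<alpha> {}\<bar> \<le> (1-2*c) + (sum \<alpha> S - sum \<alpha> Lg)"
      unfolding e s1 using c mem[OF \<open>a \<in> Lg\<close>] sg[OF \<open>a \<in> Lg\<close>] by (simp add: abs_le_iff)
  next
    fix a b assume L: "Lg = {a,b}" "a \<noteq> b"
    then have m: "a \<in> Lg" "b \<in> Lg" by auto
    have e: "sum \<alpha> Lg = \<alpha> a + \<alpha> b" using L by simp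
    show "\<bar>sum \<alpha> {a} - sum \<alpha> {b}\<bar> \<le> (1-2*c) + (sum \<alpha> S - sum \<alpha> Lg)"
      unfolding e s1 using c mem[OF m(1)] sg[OF m(1)] mem[OF m(2)] sg[OF m(2)] by (simp add: abs_le_iff)
  next
    fix a b d assume L: "Lg = {a,b,d}" "a \<noteq> b" "a \<noteq> d" "b \<noteq> d"
    then have m: "a \<in> Lg" "b \<in> Lg" "d \<in> Lg" by auto
    have e: "sum \<alpha> Lg = \<alpha> a + \<alpha> b + \<alpha> d" "sum \<alpha> {a,b} = \<alpha> a + \<alpha> b" using L by auto
    have p: "\<alpha> a + \<alpha> b < 3/2*c" using pr[OF m(1,2) L(2)] .
    show "\<bar>sum \<alpha> {a,b} - sum \<alpha> {d}\<bar> \<le> (1-2*c) + (sum \<alpha> S - sum \<alpha> Lg)"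
      unfolding e s1 using c T0 e(1) mem[OF m(1)] mem[OF m(2)] mem[OF m(3)] sg[OF m(3)] p
      by (simp add: abs_le_iff)
  next
    fix a b d e assume L: "Lg = {a,b,d,e}" "a \<noteq> b" "a \<noteq> d" "a \<noteq> e" "b \<noteq> d" "b \<noteq> e" "d \<noteq> e"
    then have m: "a \<in> Lg" "b \<in> Lg" "d \<in> Lg" "e \<in> Lg" by auto
    have ee: "sum \<alpha> Lg = \<alpha> a + \<alpha> b + \<alpha> d + \<alpha> e" "sum \<alpha> {a,b} = \<alpha> a + \<alpha> b"
      "sum \<alpha> {d,e} = \<alpha> d + \<alpha> e" using L by auto
    have p: "\<alpha> a + \<alpha> b < 3/2*c" "\<alpha> d + \<alpha> e < 3/2*c" using pr[OF m(1,2) L(2)] pr[OF m(3,4) L(7)] by auto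
    show "\<bar>sum \<alpha> {a,b} - sum \<alpha> {d,e}\<bar> \<le> (1-2*c) + (sum \<alpha> S - sum \<alpha> Lg)"
      unfolding ee s1 using c T0 ee(1) mem[OF m(1)] mem[OF m(2)] mem[OF m(3)] mem[OF m(4)] p
      by (simp add: abs_le_iff)
  qed
  then obtain P Q where "P \<union> Q = Lg" "P \<inter> Q = {}" "\<bar>sum \<alpha> P - sum \<alpha> Q\<bar> \<le> (1-2*c) + (sum \<alpha> S - sum \<alpha> Lg)"
    by blast
  then show ?thesis using split_ext[OF fin nn LS sm] by blast
qed


lemma finish_maj:
  fixes \<alpha> :: "nat \<Rightarrow> real"
  assumes "I \<subseteq> S" "J \<union> J' = S - I" "J \<inter> J' = {}" "lo \<le> sum \<alpha> I" "sum \<alpha> I \<le> hi"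
    "\<bar>sum \<alpha> J - sum \<alpha> J'\<bar> \<le> m"
  shows "\<exists>I J J'. I \<union> J \<union> J' = S \<and> I \<inter> J = {} \<and> I \<inter> J' = {} \<and> J \<inter> J' = {} \<and>
           lo \<le> sum \<alpha> I \<and> sum \<alpha> I \<le> hi \<and> \<bar>sum \<alpha> J - sum \<alpha> J'\<bar> \<le> m"
proof -
  have "I \<union> J \<union> J' = S" "I \<inter> J = {}" "I \<inter> J' = {}" using assms by auto
  then show ?thesis using assms by blast
qed

lemma part_i:
  fixes \<alpha> :: "nat \<Rightarrow> real"
  assumes fin: "finite S" and nn: "\<forall>i\<in>S. 0 \<le> \<alpha> i" and s1: "sum \<alpha> S = 1"
    and single: "\<forall>i\<in>S. \<alpha> i < 3/8"
  shows "\<exists>I J J'. I \<union> J \<union> J' = S \<and> I \<inter> J = {} \<and> I \<inter> J' = {} \<and> J \<inter> J' = {} \<and>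
           1/4 \<le> sum \<alpha> I \<and> sum \<alpha> I \<le> 1/2 \<and> \<bar>sum \<alpha> J - sum \<alpha> J'\<bar> \<le> 1/4"
proof (cases "\<exists>a\<in>S. \<alpha> a > 1/4")
  case True
  then obtain a where aS: "a \<in> S" and a: "\<alpha> a > 1/4" by blast
  define R where "R = S - {a}"
  have finR: "finite R" using fin by (simp add: R_def)
  have nnR: "\<forall>i\<in>R. 0 \<le> \<alpha> i" using nn by (simp add: R_def)
  have sR: "sum \<alpha> R = 1 - \<alpha> a" using sum.remove[OF fin aS, of \<alpha>] s1 by (simp add: R_def)
  define Lg where "Lg = {i\<in>R. \<alpha> i > 1/4}"
  have LS: "Lg \<subseteq> R" and fL: "finite Lg" using finR by (auto simp: Lg_def)
  have sm: "\<forall>i\<in>R-Lg. \<alpha> i \<le> 1/4" by (auto simp: Lg_def)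
  have T0: "sum \<alpha> Lg \<le> sum \<alpha> R" using sum_mono2[OF finR LS, of \<alpha>] nnR by auto
  have aa: "\<alpha> a < 3/8" using single aS by auto
  have card: "card Lg \<le> 2"
  proof (rule ccontr)
    assume "\<not> ?thesis" then have c5: "real (card Lg) \<ge> 3" by simp
    then have "Lg \<noteq> {}" by auto
    moreover have "\<forall>i\<in>Lg. \<alpha> i > 1/4" by (simp add: Lg_def)
    ultimately have "real (card Lg) * (1/4) < sum \<alpha> Lg" using card_bound[OF fL] by blast
    then show False using T0 sR a aa c5 by linarith
  qed
  have mem: "\<And>b. b \<in> Lg \<Longrightarrow> b \<in> S \<and> \<alpha> b > 1/4 \<and> \<alpha> b < 3/8" using single by (auto simp: Lg_def R_def)
  have "\<exists>P Q. P \<union> Q = Lg \<and> P \<inter> Q = {} \<and> \<bar>sum \<alpha> P - sum \<alpha> Q\<bar> \<le> 1/4 + (sum \<alpha> R - sum \<alpha> Lg)"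
  proof (rule lg_cases[OF fL])
    show "card Lg \<le> 4" using card by simp
  next
    assume "Lg = {}" then show "\<bar>sum \<alpha> {} - sum \<alpha> {}\<bar> \<le> 1/4 + (sum \<alpha> R - sum \<alpha> Lg)" using sR aa by simp
  next
    fix b assume L: "Lg = {b}"
    then have m: "b \<in> Lg" by auto
    have e: "sum \<alpha> Lg = \<alpha> b" using L by simp
    show "\<bar>sum \<alpha> {b} - sum \<alpha> {}\<bar> \<le> 1/4 + (sum \<alpha> R - sum \<alpha> Lg)"
      unfolding e sR using aa mem[OF m] by (simp add: abs_le_iff)
  next
    fix b d assume L: "Lg = {b,d}" "b \<noteq> d"
    then have m: "b \<in> Lg" "d \<in> Lg" by auto
    have e: "sum \<alpha> Lg = \<alpha> b + \<alpha> d" using L by simp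
    show "\<bar>sum \<alpha> {b} - sum \<alpha> {d}\<bar> \<le> 1/4 + (sum \<alpha> R - sum \<alpha> Lg)"
      using T0 mem[OF m(1)] mem[OF m(2)] by (simp add: abs_le_iff)
  next
    fix b d e assume L: "Lg = {b,d,e}" "b \<noteq> d" "b \<noteq> e" "d \<noteq> e"
    then have "card Lg = 3" by simp
    then show "\<bar>sum \<alpha> {b,d} - sum \<alpha> {e}\<bar> \<le> 1/4 + (sum \<alpha> R - sum \<alpha> Lg)" using card by simp
  next
    fix b d e f assume L: "Lg = {b,d,e,f}" "b \<noteq> d" "b \<noteq> e" "b \<noteq> f" "d \<noteq> e" "d \<noteq> f" "e \<noteq> f"
    then have "card Lg = 4" by simp
    then show "\<bar>sum \<alpha> {b,d} - sum \<alpha> {e,f}\<bar> \<le> 1/4 + (sum \<alpha> R - sum \<alpha> Lg)" using card by simp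
  qed
  then obtain P Q where "P \<union> Q = Lg" "P \<inter> Q = {}" "\<bar>sum \<alpha> P - sum \<alpha> Q\<bar> \<le> 1/4 + (sum \<alpha> R - sum \<alpha> Lg)"
    by blast
  then obtain J J' where JJ: "J \<union> J' = R" "J \<inter> J' = {}" "\<bar>sum \<alpha> J - sum \<alpha> J'\<bar> \<le> 1/4"
    using split_ext[OF finR nnR LS sm] by blast
  show ?thesis
    by (rule finish_maj[of "{a}" S J J']) (use aS JJ a aa in \<open>auto simp: R_def\<close>)
next
  case False
  then have sm: "\<forall>i\<in>S. 0 \<le> \<alpha> i \<and> \<alpha> i \<le> 1/4" using nn by auto
  obtain I where I: "I \<subseteq> S" "1/4 \<le> sum \<alpha> I" "sum \<alpha> I \<le> 1/4 + 1/4"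
    using subset_sum[OF fin sm, of "1/4"] s1 by auto
  have finR: "finite (S - I)" using fin by simp
  have nnR: "\<forall>i\<in>S - I. 0 \<le> \<alpha> i" using nn by simp
  have sR: "sum \<alpha> (S - I) \<ge> 0" using nnR by (auto intro: sum_nonneg)
  obtain J J' where JJ: "J \<union> J' = S - I" "J \<inter> J' = {}" "\<bar>sum \<alpha> J - sum \<alpha> J'\<bar> \<le> 1/4"
    proof -
    have bd: "\<bar>sum \<alpha> {} - sum \<alpha> {}\<bar> \<le> 1/4 + (sum \<alpha> (S - I) - sum \<alpha> {})" using sR by simp
    have u: "{} \<union> {} = {}" "{} \<inter> {} = {}" "{} \<subseteq> S - I" by simp_all
    have sm': "\<forall>i\<in>(S - I) - {}. \<alpha> i \<le> 1/4" using sm by simp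
    show "(\<And>J J'. J \<union> J' = S - I \<Longrightarrow> J \<inter> J' = {} \<Longrightarrow> \<bar>sum \<alpha> J - sum \<alpha> J'\<bar> \<le> 1/4 \<Longrightarrow> thesis) \<Longrightarrow> thesis"
      using split_ext[OF finR nnR u(3) sm' u(1,2) bd] by blast
  qed
  show ?thesis by (rule finish_maj[of I S J J']) (use I JJ in auto)
qed

lemma part_iii:
  fixes \<alpha> :: "nat \<Rightarrow> real"
  assumes fin: "finite S" and nn: "\<forall>i\<in>S. 0 \<le> \<alpha> i" and s1: "sum \<alpha> S = 1"
    and single: "\<forall>i\<in>S. \<alpha> i < 5/12"
    and pair: "\<forall>i\<in>S. \<forall>j\<in>S. i \<noteq> j \<longrightarrow> \<alpha> i + \<alpha> j < 5/12"
  shows "\<exists>I J J'. I \<union> J \<union> J' = S \<and> I \<inter> J = {} \<and> I \<inter> J' = {} \<and> J \<inter> J' = {} \<and>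
           1/6 \<le> sum \<alpha> I \<and> sum \<alpha> I \<le> 1/3 \<and> \<bar>sum \<alpha> J - sum \<alpha> J'\<bar> \<le> 1/6"
proof (cases "\<exists>a\<in>S. \<alpha> a > 1/3")
  case True
  then obtain a where aS: "a \<in> S" and a: "\<alpha> a > 1/3" by blast
  have aa: "\<alpha> a < 5/12" using single aS by auto
  define R where "R = S - {a}"
  have finR: "finite R" using fin by (simp add: R_def)
  have sR: "sum \<alpha> R = 1 - \<alpha> a" using sum.remove[OF fin aS, of \<alpha>] s1 by (simp add: R_def)
  have smR: "\<forall>i\<in>R. 0 \<le> \<alpha> i \<and> \<alpha> i \<le> 1/6"
  proof
    fix i assume "i \<in> R"
    then have "i \<in> S" "i \<noteq> a" by (auto simp: R_def)
    then have "\<alpha> i + \<alpha> a < 5/12" using pair aS by blast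
    then show "0 \<le> \<alpha> i \<and> \<alpha> i \<le> 1/6" using nn \<open>i \<in> S\<close> a by auto
  qed
  obtain I where I: "I \<subseteq> R" "1/6 \<le> sum \<alpha> I" "sum \<alpha> I \<le> 1/6 + 1/6"
    using subset_sum[OF finR smR, of "1/6"] sR aa by auto
  have IS: "I \<subseteq> S" using I by (auto simp: R_def)
  have aI: "a \<notin> I" using I by (auto simp: R_def)
  have finS': "finite (S - I)" using fin by simp
  have nnS': "\<forall>i\<in>S - I. 0 \<le> \<alpha> i" using nn by simp
  have sS': "sum \<alpha> (S - I) = 1 - sum \<alpha> I" using sum_diff[OF fin IS, of \<alpha>] s1 by simp
  have LS: "{a} \<subseteq> S - I" using aS aI by auto
  have sm: "\<forall>i\<in>(S - I) - {a}. \<alpha> i \<le> 1/6" using smR by (auto simp: R_def)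
  obtain J J' where JJ: "J \<union> J' = S - I" "J \<inter> J' = {}" "\<bar>sum \<alpha> J - sum \<alpha> J'\<bar> \<le> 1/6"
  proof -
    have bd: "\<bar>sum \<alpha> {a} - sum \<alpha> {}\<bar> \<le> 1/6 + (sum \<alpha> (S - I) - sum \<alpha> {a})"
      using sS' I a aa by (simp add: abs_le_iff)
    have u: "{a} \<union> {} = {a}" "{a} \<inter> {} = {}" by simp_all
    show "(\<And>J J'. J \<union> J' = S - I \<Longrightarrow> J \<inter> J' = {} \<Longrightarrow> \<bar>sum \<alpha> J - sum \<alpha> J'\<bar> \<le> 1/6 \<Longrightarrow> thesis) \<Longrightarrow> thesis"
      using split_ext[OF finS' nnS' LS sm u bd] by blast
  qed
  show ?thesis by (rule finish_maj[of I S J J']) (use IS I JJ in auto)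
next
  case False
  note F1 = False
  show ?thesis
  proof (cases "\<exists>a\<in>S. \<alpha> a > 1/6")
    case True
    then obtain a where aS: "a \<in> S" and a: "\<alpha> a > 1/6" by blast
    have aa: "\<alpha> a \<le> 1/3" using F1 aS by auto
    define R where "R = S - {a}"
    have finR: "finite R" using fin by (simp add: R_def)
    have nnR: "\<forall>i\<in>R. 0 \<le> \<alpha> i" using nn by (simp add: R_def)
    have sR: "sum \<alpha> R = 1 - \<alpha> a" using sum.remove[OF fin aS, of \<alpha>] s1 by (simp add: R_def)
    define Lg where "Lg = {i\<in>R. \<alpha> i > 1/6}"
    have LS: "Lg \<subseteq> R" and fL: "finite Lg" using finR by (auto simp: Lg_def)
    have sm: "\<forall>i\<in>R-Lg. \<alpha> i \<le> 1/6" by (auto simp: Lg_def)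
    have T0: "sum \<alpha> Lg \<le> sum \<alpha> R" using sum_mono2[OF finR LS, of \<alpha>] nnR by auto
    have card: "card Lg \<le> 4"
    proof (rule ccontr)
      assume "\<not> ?thesis" then have c5: "real (card Lg) \<ge> 5" by simp
      then have "Lg \<noteq> {}" by auto
      moreover have "\<forall>i\<in>Lg. \<alpha> i > 1/6" by (simp add: Lg_def)
    ultimately have "real (card Lg) * (1/6) < sum \<alpha> Lg" using card_bound[OF fL] by blast
      then show False using T0 sR a c5 by linarith
    qed
    have mem: "\<And>b. b \<in> Lg \<Longrightarrow> b \<in> S \<and> \<alpha> b > 1/6 \<and> \<alpha> b \<le> 1/3" using F1 by (auto simp: Lg_def R_def)
    have pr: "\<And>b d. b \<in> Lg \<Longrightarrow> d \<in> Lg \<Longrightarrow> b \<noteq> d \<Longrightarrow> \<alpha> b + \<alpha> d < 5/12" using pair mem by blast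
    have "\<exists>P Q. P \<union> Q = Lg \<and> P \<inter> Q = {} \<and> \<bar>sum \<alpha> P - sum \<alpha> Q\<bar> \<le> 1/6 + (sum \<alpha> R - sum \<alpha> Lg)"
    proof (rule lg_cases[OF fL card])
      assume "Lg = {}" then show "\<bar>sum \<alpha> {} - sum \<alpha> {}\<bar> \<le> 1/6 + (sum \<alpha> R - sum \<alpha> Lg)" using sR aa by simp
    next
      fix b assume L: "Lg = {b}"
      then have m: "b \<in> Lg" by auto
      have e: "sum \<alpha> Lg = \<alpha> b" using L by simp
      show "\<bar>sum \<alpha> {b} - sum \<alpha> {}\<bar> \<le> 1/6 + (sum \<alpha> R - sum \<alpha> Lg)"
        unfolding e sR using aa mem[OF m] by (simp add: abs_le_iff)
    next
      fix b d assume L: "Lg = {b,d}" "b \<noteq> d"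
      then have m: "b \<in> Lg" "d \<in> Lg" by auto
      show "\<bar>sum \<alpha> {b} - sum \<alpha> {d}\<bar> \<le> 1/6 + (sum \<alpha> R - sum \<alpha> Lg)"
        using T0 mem[OF m(1)] mem[OF m(2)] by (simp add: abs_le_iff)
    next
      fix b d e assume L: "Lg = {b,d,e}" "b \<noteq> d" "b \<noteq> e" "d \<noteq> e"
      then have m: "b \<in> Lg" "d \<in> Lg" "e \<in> Lg" by auto
      have ee: "sum \<alpha> Lg = \<alpha> b + \<alpha> d + \<alpha> e" "sum \<alpha> {b,d} = \<alpha> b + \<alpha> d" using L by auto
      have p: "\<alpha> b + \<alpha> d < 5/12" using pr[OF m(1,2) L(2)] .
      show "\<bar>sum \<alpha> {b,d} - sum \<alpha> {e}\<bar> \<le> 1/6 + (sum \<alpha> R - sum \<alpha> Lg)"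
        unfolding ee sR using T0 ee(1) sR aa mem[OF m(1)] mem[OF m(2)] mem[OF m(3)] p
        by (simp add: abs_le_iff)
    next
      fix b d e f assume L: "Lg = {b,d,e,f}" "b \<noteq> d" "b \<noteq> e" "b \<noteq> f" "d \<noteq> e" "d \<noteq> f" "e \<noteq> f"
      then have m: "b \<in> Lg" "d \<in> Lg" "e \<in> Lg" "f \<in> Lg" by auto
      have ee: "sum \<alpha> {b,d} = \<alpha> b + \<alpha> d" "sum \<alpha> {e,f} = \<alpha> e + \<alpha> f" using L by auto
      have p: "\<alpha> b + \<alpha> d < 5/12" "\<alpha> e + \<alpha> f < 5/12" using pr[OF m(1,2) L(2)] pr[OF m(3,4) L(7)] by auto
      show "\<bar>sum \<alpha> {b,d} - sum \<alpha> {e,f}\<bar> \<le> 1/6 + (sum \<alpha> R - sum \<alpha> Lg)"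
        unfolding ee using T0 mem[OF m(1)] mem[OF m(2)] mem[OF m(3)] mem[OF m(4)] p
        by (simp add: abs_le_iff)
    qed
    then obtain P Q where "P \<union> Q = Lg" "P \<inter> Q = {}" "\<bar>sum \<alpha> P - sum \<alpha> Q\<bar> \<le> 1/6 + (sum \<alpha> R - sum \<alpha> Lg)"
      by blast
    then obtain J J' where JJ: "J \<union> J' = R" "J \<inter> J' = {}" "\<bar>sum \<alpha> J - sum \<alpha> J'\<bar> \<le> 1/6"
      using split_ext[OF finR nnR LS sm] by blast
    show ?thesis
      by (rule finish_maj[of "{a}" S J J']) (use aS JJ a aa in \<open>auto simp: R_def\<close>)
  next
    case False
    then have sm: "\<forall>i\<in>S. 0 \<le> \<alpha> i \<and> \<alpha> i \<le> 1/6" using nn by auto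
    obtain I where I: "I \<subseteq> S" "1/6 \<le> sum \<alpha> I" "sum \<alpha> I \<le> 1/6 + 1/6"
      using subset_sum[OF fin sm, of "1/6"] s1 by auto
    have finR: "finite (S - I)" using fin by simp
    have nnR: "\<forall>i\<in>S - I. 0 \<le> \<alpha> i" using nn by simp
    have sR: "sum \<alpha> (S - I) \<ge> 0" using nnR by (auto intro: sum_nonneg)
    obtain J J' where JJ: "J \<union> J' = S - I" "J \<inter> J' = {}" "\<bar>sum \<alpha> J - sum \<alpha> J'\<bar> \<le> 1/6"
    proof -
      have bd: "\<bar>sum \<alpha> {} - sum \<alpha> {}\<bar> \<le> 1/6 + (sum \<alpha> (S - I) - sum \<alpha> {})" using sR by simp
      have u: "{} \<union> {} = {}" "{} \<inter> {} = {}" "{} \<subseteq> S - I" by simp_all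
      have sm': "\<forall>i\<in>(S - I) - {}. \<alpha> i \<le> 1/6" using sm by simp
      show "(\<And>J J'. J \<union> J' = S - I \<Longrightarrow> J \<inter> J' = {} \<Longrightarrow> \<bar>sum \<alpha> J - sum \<alpha> J'\<bar> \<le> 1/6 \<Longrightarrow> thesis) \<Longrightarrow> thesis"
        using split_ext[OF finR nnR u(3) sm' u(1,2) bd] by blast
    qed
    show ?thesis by (rule finish_maj[of I S J J']) (use I JJ in auto)
  qed
qed


lemma pairs_lt:
  fixes \<alpha> :: "nat \<Rightarrow> real"
  assumes "\<not> (\<exists>i j. 1 \<le> i \<and> i < j \<and> j \<le> k \<and> sum \<alpha> {i, j} \<ge> x)"
  shows "\<forall>i\<in>{1..k}. \<forall>j\<in>{1..k}. i \<noteq> j \<longrightarrow> \<alpha> i + \<alpha> j < x"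
proof (intro ballI impI)
  fix i j assume ij: "i \<in> {1..k}" "j \<in> {1..k}" "i \<noteq> j"
  show "\<alpha> i + \<alpha> j < x"
  proof (cases "i < j")
    case True
    then have "\<not> sum \<alpha> {i, j} \<ge> x" using assms ij by auto
    then show ?thesis using True by simp
  next
    case False
    then have "j < i" using ij by simp
    then have "\<not> sum \<alpha> {j, i} \<ge> x" using assms ij by auto
    then show ?thesis using \<open>j < i\<close> by simp
  qed
qed

lemma mk2:
  fixes \<alpha> :: "nat \<Rightarrow> real"
  assumes "1 \<le> i" "i < j" "j \<le> k" "x \<le> \<alpha> i + \<alpha> j"
  shows "\<exists>i j. 1 \<le> i \<and> i < j \<and> j \<le> k \<and> x \<le> sum \<alpha> {i, j}"
  using assms by (intro exI[of _ i] exI[of _ j]) simp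

lemma five: "{1..5::nat} = {1,2,3,4,5}" by auto
lemma four: "{1..4::nat} = {1,2,3,4}" by auto
lemma three: "{1..3::nat} = {1,2,3}" by auto
lemma two: "{1..2::nat} = {1,2}" by auto

lemma mk_maj:
  fixes \<alpha> :: "nat \<Rightarrow> real"
  shows "I \<union> J \<union> J' = {1..k} \<Longrightarrow> I \<inter> J = {} \<Longrightarrow> I \<inter> J' = {} \<Longrightarrow> J \<inter> J' = {} \<Longrightarrow>
    2*\<theta> - 1 \<le> sum \<alpha> I \<Longrightarrow> sum \<alpha> I \<le> 4*\<theta> - 2 \<Longrightarrow> \<bar>sum \<alpha> J - sum \<alpha> J'\<bar> \<le> 2*\<theta> - 1 \<Longrightarrow>
    condIImaj k \<alpha> \<theta>"
  unfolding condIImaj_def by blast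

lemma part_iv:
  fixes \<alpha> :: "nat \<Rightarrow> real"
  assumes s1: "(\<Sum>i=1..5. \<alpha> i) = 1" and np: "\<not> condI2maj 5 \<alpha> (11/20)"
  shows "condIImaj 5 \<alpha> (11/20)"
proof -
  have s: "\<alpha> 1 + \<alpha> 2 + \<alpha> 3 + \<alpha> 4 + \<alpha> 5 = 1" using s1[unfolded five] by simp
  have p: "\<forall>i\<in>{1..5}. \<forall>j\<in>{1..5}. i \<noteq> j \<longrightarrow> \<alpha> i + \<alpha> j < 9/20"
    using pairs_lt[of 5 "1 - 11/20" \<alpha>] np unfolding condI2maj_def by auto
  have p12: "\<alpha> 1 + \<alpha> 2 < 9/20" and p13: "\<alpha> 1 + \<alpha> 3 < 9/20" and p14: "\<alpha> 1 + \<alpha> 4 < 9/20"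
    and p15: "\<alpha> 1 + \<alpha> 5 < 9/20" and p23: "\<alpha> 2 + \<alpha> 3 < 9/20" and p24: "\<alpha> 2 + \<alpha> 4 < 9/20"
    and p25: "\<alpha> 2 + \<alpha> 5 < 9/20" and p34: "\<alpha> 3 + \<alpha> 4 < 9/20" and p35: "\<alpha> 3 + \<alpha> 5 < 9/20"
    and p45: "\<alpha> 4 + \<alpha> 5 < 9/20"
    using p by (auto simp: five)
  have "\<alpha> 1 \<le> 1/5 \<or> \<alpha> 2 \<le> 1/5 \<or> \<alpha> 3 \<le> 1/5 \<or> \<alpha> 4 \<le> 1/5 \<or> \<alpha> 5 \<le> 1/5" using s by linarith
  then show ?thesis
  proof (elim disjE)
    assume a: "\<alpha> 1 \<le> 1/5"
    show ?thesis
      by (rule mk_maj[of "{1}" "{2,3}" "{4,5}"]) (use a s p23 p45 in \<open>auto simp: five split: abs_split\<close>)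
  next
    assume a: "\<alpha> 2 \<le> 1/5"
    show ?thesis
      by (rule mk_maj[of "{2}" "{1,3}" "{4,5}"]) (use a s p13 p45 in \<open>auto simp: five split: abs_split\<close>)
  next
    assume a: "\<alpha> 3 \<le> 1/5"
    show ?thesis
      by (rule mk_maj[of "{3}" "{1,2}" "{4,5}"]) (use a s p12 p45 in \<open>auto simp: five split: abs_split\<close>)
  next
    assume a: "\<alpha> 4 \<le> 1/5"
    show ?thesis
      by (rule mk_maj[of "{4}" "{1,2}" "{3,5}"]) (use a s p12 p35 in \<open>auto simp: five split: abs_split\<close>)
  next
    assume a: "\<alpha> 5 \<le> 1/5"
    show ?thesis
      by (rule mk_maj[of "{5}" "{1,2}" "{3,4}"]) (use a s p12 p34 in \<open>auto simp: five split: abs_split\<close>)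
  qed
qed

theorem lemma2p20:
  fixes k :: nat and \<alpha> :: "nat \<Rightarrow> real" and \<theta> :: real
  assumes nonneg: "\<And>i. i \<in> {1..k} \<Longrightarrow> \<alpha> i \<ge> 0"
    and sum1: "(\<Sum>i=1..k. \<alpha> i) = 1"
    and th: "1/3 \<le> \<theta>" "\<theta> \<le> 1"
  shows "(\<theta> = 5/8 \<longrightarrow> condI k \<alpha> \<theta> \<or> condIImaj k \<alpha> \<theta>)
       \<and> (\<theta> \<ge> 3/5 \<longrightarrow> condI k \<alpha> \<theta> \<or> condI2 k \<alpha> \<theta> \<or> condIImin k \<alpha> \<theta>)
       \<and> (\<theta> = 7/12 \<longrightarrow> condI k \<alpha> \<theta> \<or> condI2maj k \<alpha> \<theta> \<or> condIImaj k \<alpha> \<theta>)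
       \<and> (k = 5 \<and> \<theta> = 11/20 \<longrightarrow> condI2maj k \<alpha> \<theta> \<or> condIImaj k \<alpha> \<theta>)
       \<and> (k \<in> {3, 4} \<and> \<theta> \<ge> 1/2 \<longrightarrow> condI2maj k \<alpha> \<theta>)
       \<and> ((k = 3 \<and> \<theta> \<ge> 5/9) \<or> (k = 2 \<and> \<theta> \<ge> 1/3) \<longrightarrow> condI2 k \<alpha> \<theta>)"
proof (intro conjI impI)
  have fin: "finite {1..k}" by simp
  have nn: "\<forall>i\<in>{1..k}. 0 \<le> \<alpha> i" using nonneg by auto
  have s1: "sum \<alpha> {1..k} = 1" using sum1 by simp
  {
    assume t: "\<theta> = 5/8"
    show "condI k \<alpha> \<theta> \<or> condIImaj k \<alpha> \<theta>"
    proof (cases "condI k \<alpha> \<theta>")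
      case False
      then have "\<forall>i\<in>{1..k}. \<alpha> i < 3/8" using t unfolding condI_def by auto
      from part_i[OF fin nn s1 this] obtain I J J' where
        H: "I \<union> J \<union> J' = {1..k}" "I \<inter> J = {}" "I \<inter> J' = {}" "J \<inter> J' = {}"
        "1/4 \<le> sum \<alpha> I" "sum \<alpha> I \<le> 1/2" "\<bar>sum \<alpha> J - sum \<alpha> J'\<bar> \<le> 1/4" by blast
      have "condIImaj k \<alpha> \<theta>"
        by (rule mk_maj[OF H(1-4)]) (use H(5-7) t in simp_all)
      then show ?thesis by simp
    qed simp
  }
  {
    assume t: "\<theta> \<ge> 3/5"
    show "condI k \<alpha> \<theta> \<or> condI2 k \<alpha> \<theta> \<or> condIImin k \<alpha> \<theta>"
    proof (cases "condI k \<alpha> \<theta> \<or> condI2 k \<alpha> \<theta>")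
      case False
      then have sg: "\<forall>i\<in>{1..k}. \<alpha> i < 1 - \<theta>" unfolding condI_def by auto
      have pr: "\<forall>i\<in>{1..k}. \<forall>j\<in>{1..k}. i \<noteq> j \<longrightarrow> \<alpha> i + \<alpha> j < 3/2*(1-\<theta>)"
        using pairs_lt[of k "3/2*(1-\<theta>)" \<alpha>] False unfolding condI2_def by blast
      have c1: "0 \<le> 1 - \<theta>" "1 - \<theta> \<le> 2/5" using t th by auto
      obtain J J' where H: "J \<union> J' = {1..k}" "J \<inter> J' = {}" "\<bar>sum \<alpha> J - sum \<alpha> J'\<bar> \<le> 1 - 2*(1-\<theta>)"
        using part_ii[OF fin nn s1 c1 sg pr] by blast
      have "\<bar>sum \<alpha> J - sum \<alpha> J'\<bar> \<le> 2*\<theta> - 1" using H(3) by simp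
      then have "condIImin k \<alpha> \<theta>" unfolding condIImin_def using H(1,2) by blast
      then show ?thesis by simp
    qed auto
  }
  {
    assume t: "\<theta> = 7/12"
    show "condI k \<alpha> \<theta> \<or> condI2maj k \<alpha> \<theta> \<or> condIImaj k \<alpha> \<theta>"
    proof (cases "condI k \<alpha> \<theta> \<or> condI2maj k \<alpha> \<theta>")
      case False
      then have sg: "\<forall>i\<in>{1..k}. \<alpha> i < 5/12" unfolding condI_def t by auto
      have pr: "\<forall>i\<in>{1..k}. \<forall>j\<in>{1..k}. i \<noteq> j \<longrightarrow> \<alpha> i + \<alpha> j < 5/12"
        using pairs_lt[of k "5/12" \<alpha>] False unfolding condI2maj_def t by auto
      from part_iii[OF fin nn s1 sg pr] obtain I J J' where
        H: "I \<union> J \<union> J' = {1..k}" "I \<inter> J = {}" "I \<inter> J' = {}" "J \<inter> J' = {}"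
        "1/6 \<le> sum \<alpha> I" "sum \<alpha> I \<le> 1/3" "\<bar>sum \<alpha> J - sum \<alpha> J'\<bar> \<le> 1/6" by blast
      have "condIImaj k \<alpha> \<theta>"
        by (rule mk_maj[OF H(1-4)]) (use H(5-7) t in simp_all)
      then show ?thesis by simp
    qed auto
  }
  {
    assume t: "k = 5 \<and> \<theta> = 11/20"
    have k5: "k = 5" and t2: "\<theta> = 11/20" using t by auto
    show "condI2maj k \<alpha> \<theta> \<or> condIImaj k \<alpha> \<theta>"
      unfolding k5 t2 using part_iv[of \<alpha>] sum1[unfolded k5] by blast
  }
  {
    assume t: "k \<in> {3, 4} \<and> \<theta> \<ge> 1/2"
    show "condI2maj k \<alpha> \<theta>"
    proof (cases "k = 3")
      case True
      have s: "\<alpha> 1 + \<alpha> 2 + \<alpha> 3 = 1" using sum1[unfolded True three] by simp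
      have n: "\<alpha> 1 \<ge> 0" "\<alpha> 2 \<ge> 0" "\<alpha> 3 \<ge> 0" using nonneg True by auto
      have "\<alpha> 1 + \<alpha> 2 \<ge> 1/2 \<or> \<alpha> 1 + \<alpha> 3 \<ge> 1/2 \<or> \<alpha> 2 + \<alpha> 3 \<ge> 1/2" using s n by linarith
      then show ?thesis
      proof (elim disjE)
      assume "1/2 \<le> \<alpha> 1 + \<alpha> 2"
      then show ?thesis unfolding condI2maj_def using True t by (intro mk2[of 1 2]) auto
    next
      assume "1/2 \<le> \<alpha> 1 + \<alpha> 3"
      then show ?thesis unfolding condI2maj_def using True t by (intro mk2[of 1 3]) auto
    next
      assume "1/2 \<le> \<alpha> 2 + \<alpha> 3"
      then show ?thesis unfolding condI2maj_def using True t by (intro mk2[of 2 3]) auto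
      qed
    next
      case False
      then have k4: "k = 4" using t by auto
      have s: "\<alpha> 1 + \<alpha> 2 + \<alpha> 3 + \<alpha> 4 = 1" using sum1[unfolded k4 four] by simp
      have "\<alpha> 1 + \<alpha> 2 \<ge> 1/2 \<or> \<alpha> 3 + \<alpha> 4 \<ge> 1/2" using s by linarith
      then show ?thesis
      proof (elim disjE)
      assume "1/2 \<le> \<alpha> 1 + \<alpha> 2"
      then show ?thesis unfolding condI2maj_def using k4 t by (intro mk2[of 1 2]) auto
    next
      assume "1/2 \<le> \<alpha> 3 + \<alpha> 4"
      then show ?thesis unfolding condI2maj_def using k4 t by (intro mk2[of 3 4]) auto
      qed
    qed
  }
  {
    assume t: "(k = 3 \<and> \<theta> \<ge> 5/9) \<or> (k = 2 \<and> \<theta> \<ge> 1/3)"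
    show "condI2 k \<alpha> \<theta>"
    proof (cases "k = 3")
      case True
      have s: "\<alpha> 1 + \<alpha> 2 + \<alpha> 3 = 1" using sum1[unfolded True three] by simp
      have n: "\<alpha> 1 \<ge> 0" "\<alpha> 2 \<ge> 0" "\<alpha> 3 \<ge> 0" using nonneg True by auto
      have tt: "3/2*(1-\<theta>) \<le> 2/3" using t True by auto
      have "\<alpha> 1 + \<alpha> 2 \<ge> 2/3 \<or> \<alpha> 1 + \<alpha> 3 \<ge> 2/3 \<or> \<alpha> 2 + \<alpha> 3 \<ge> 2/3" using s n by linarith
      then show ?thesis
      proof (elim disjE)
      assume "2/3 \<le> \<alpha> 1 + \<alpha> 2"
      then show ?thesis unfolding condI2_def using True tt by (intro mk2[of 1 2]) auto
    next
      assume "2/3 \<le> \<alpha> 1 + \<alpha> 3"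
      then show ?thesis unfolding condI2_def using True tt by (intro mk2[of 1 3]) auto
    next
      assume "2/3 \<le> \<alpha> 2 + \<alpha> 3"
      then show ?thesis unfolding condI2_def using True tt by (intro mk2[of 2 3]) auto
      qed
    next
      case False
      then have k2: "k = 2" "\<theta> \<ge> 1/3" using t by auto
      have s: "\<alpha> 1 + \<alpha> 2 = 1" using sum1[unfolded k2(1) two] by simp
      show ?thesis unfolding condI2_def using k2 s
        by (intro exI[of _ 1] exI[of _ 2]) auto
    qed
  }
qed

end
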